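(* Let $g:\mathbb{R}\to[0,1]$ be a continuous monotone link function, differentiable with $m_g\le |g'|\le M_g$ for positive constants $m_g,M_g$, such that the vector field $G(\theta)=\mathbb{E}_w[w\,g(w^{\mathsf T}\theta)]$ is well defined. Suppose there is $M_w>0$ such that for every time step $t$, $\|w_{t-d}^{t-1}\|_\infty\le M_w$ with probability one. Fix $i\in\{1,\dots,N_1\}$, let $\Theta_i\subset\mathbb{R}^N$ be a convex compact set containing $\theta_i^{\mathrm{true}}$, and let $\hat\theta_i$ be a weak solution of the variational inequality: find $\hat\theta_i\in\Theta_i$ with $\langle F^{(i)}_{W_T}(\theta),\theta-\hat\theta_i\rangle\ge0$ for all $\theta\in\Theta_i$, where $$F^{(i)}_{W_T}(\theta):=\frac1T\sum_{t=1}^T w_{t-d}^{t-1}\Big(g\big((w_{t-d}^{t-1})^{\mathsf T}\theta\big)-y_t^{(i)}\Big).$$ Let $\lambda_1$ be the smallest eigenvalue of $\mathbb{W}_{1:T}=\frac1T\sum_{t=1}^T w_{t-d}^{t-1}(w_{t-d}^{t-1})^{\mathsf T}$. Then for any $\varepsilon\in(0,1)$, with probability at least $1-\varepsilon$, $$\|\hat\theta_i-\theta_i^{\mathrm{true}}\|_2\le\frac{M_w}{m_g\lambda_1}\sqrt{\frac{N\log(2N/\varepsilon)}{T}}.$$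
   Context: Model (discrete Hawkes network / generalized linear VAR): there are $N_1$ binary time series $y_t^{(i)}\in\{0,1\}$ ($i=1,\dots,N_1$), $N_2$ real-valued time series $x_t^{(j)}$, and $N_3$ static covariates $z_1,\dots,z_{N_3}$. With memory depth $d$, let $w_{t-d}^{t-1}\in\mathbb{R}^N$, $N=1+N_3+dN_2+dN_1$, be the vector $(1,z_1,\dots,z_{N_3},x_{t-1}^{(1)},\dots,x_{t-d}^{(1)},\dots,x_{t-1}^{(N_2)},\dots,x_{t-d}^{(N_2)},y_{t-1}^{(1)},\dots,y_{t-d}^{(1)},\dots,y_{t-1}^{(N_1)},\dots,y_{t-d}^{(N_1)})^{\mathsf T}$, where observations at times $1-d,\dots,0$ are given history, and $W_T$ denotes the collection of these vectors. The model assumes that for each $i$ and each $t=1,\dots,T$, $\mathbb{P}(y_t^{(i)}=1\mid \text{past observations up to } t-1)=g((w_{t-d}^{t-1})^{\mathsf T}\theta_i^{\mathrm{true}})$ for an unknown parameter $\theta_i^{\mathrm{true}}\in\mathbb{R}^N$. *)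

theory Defs
  imports "HOL-Probability.Probability"
begin

definition dimN :: "nat \<Rightarrow> nat \<Rightarrow> nat \<Rightarrow> nat \<Rightarrow> nat" where
  "dimN N1 N2 N3 d = 1 + N3 + d * N2 + d * N1"

text \<open>k-th coordinate (0-based, k < N) of the vector w_{t-d}^{t-1}, in the order
  (1, z_1..z_N3, x^(1)_{t-1}..x^(1)_{t-d}, ..., x^(N2)_{t-1}..x^(N2)_{t-d},
   y^(1)_{t-1}..y^(1)_{t-d}, ..., y^(N1)_{t-1}..y^(N1)_{t-d}).
  Series are indexed from 1, times are integers.\<close>
definition wcoord :: "nat \<Rightarrow> nat \<Rightarrow> nat \<Rightarrow> nat \<Rightarrow> (nat \<Rightarrow> 'a \<Rightarrow> real) \<Rightarrow>
    (nat \<Rightarrow> int \<Rightarrow> 'a \<Rightarrow> real) \<Rightarrow> (nat \<Rightarrow> int \<Rightarrow> 'a \<Rightarrow> real) \<Rightarrow> int \<Rightarrow> 'a \<Rightarrow> nat \<Rightarrow> real" where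
  "wcoord N1 N2 N3 d z x y t \<omega> k =
    (if k = 0 then 1
     else if k \<le> N3 then z k \<omega>
     else if k \<le> N3 + d * N2 then
       x ((k - N3 - 1) div d + 1) (t - int ((k - N3 - 1) mod d + 1)) \<omega>
     else if k < dimN N1 N2 N3 d then
       y ((k - N3 - d * N2 - 1) div d + 1) (t - int ((k - N3 - d * N2 - 1) mod d + 1)) \<omega>
     else 0)"

text \<open>The regressor vector as an element of real^'n, where idx :: 'n \<Rightarrow> nat is a fixed
  bijection of the index type onto {..<N}.\<close>
definition wvec :: "('n::finite \<Rightarrow> nat) \<Rightarrow> nat \<Rightarrow> nat \<Rightarrow> nat \<Rightarrow> nat \<Rightarrow> (nat \<Rightarrow> 'a \<Rightarrow> real) \<Rightarrow>
    (nat \<Rightarrow> int \<Rightarrow> 'a \<Rightarrow> real) \<Rightarrow> (nat \<Rightarrow> int \<Rightarrow> 'a \<Rightarrow> real) \<Rightarrow> int \<Rightarrow> 'a \<Rightarrow> real^'n" where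
  "wvec idx N1 N2 N3 d z x y t \<omega> = (\<chi> n. wcoord N1 N2 N3 d z x y t \<omega> (idx n))"

definition obs_vars :: "nat \<Rightarrow> nat \<Rightarrow> nat \<Rightarrow> nat \<Rightarrow> (nat \<Rightarrow> 'a \<Rightarrow> real) \<Rightarrow>
    (nat \<Rightarrow> int \<Rightarrow> 'a \<Rightarrow> real) \<Rightarrow> (nat \<Rightarrow> int \<Rightarrow> 'a \<Rightarrow> real) \<Rightarrow> int \<Rightarrow> ('a \<Rightarrow> real) set" where
  "obs_vars N1 N2 N3 d z x y s =
     {z a | a. a \<in> {1..N3}}
     \<union> {x j r | j r. j \<in> {1..N2} \<and> r \<in> {1 - int d..s}}
     \<union> {y i r | i r. i \<in> {1..N1} \<and> r \<in> {1 - int d..s}}"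

definition past_sigma :: "'a measure \<Rightarrow> nat \<Rightarrow> nat \<Rightarrow> nat \<Rightarrow> nat \<Rightarrow> (nat \<Rightarrow> 'a \<Rightarrow> real) \<Rightarrow>
    (nat \<Rightarrow> int \<Rightarrow> 'a \<Rightarrow> real) \<Rightarrow> (nat \<Rightarrow> int \<Rightarrow> 'a \<Rightarrow> real) \<Rightarrow> int \<Rightarrow> 'a measure" where
  "past_sigma M N1 N2 N3 d z x y s =
     sigma (space M) {X -` B \<inter> space M | X B. X \<in> obs_vars N1 N2 N3 d z x y s \<and> B \<in> sets borel}"

definition is_eigenvalue :: "real^'n^'n \<Rightarrow> real \<Rightarrow> bool" where
  "is_eigenvalue A k \<longleftrightarrow> (\<exists>v. v \<noteq> 0 \<and> A *v v = k *\<^sub>R v)"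

definition lambda_min :: "real^'n^'n \<Rightarrow> real" where
  "lambda_min A = Min {k. is_eigenvalue A k}"

definition outer :: "real^'n \<Rightarrow> real^'n^'n" where
  "outer v = (\<chi> i j. v $ i * v $ j)"

definition Wmat :: "nat \<Rightarrow> (int \<Rightarrow> real^'n) \<Rightarrow> real^'n^'n" where
  "Wmat T w = (1 / real T) *\<^sub>R (\<Sum>t\<in>{1..int T}. outer (w t))"

definition Fop :: "(real \<Rightarrow> real) \<Rightarrow> nat \<Rightarrow> (int \<Rightarrow> real^'n) \<Rightarrow> (int \<Rightarrow> real) \<Rightarrow> real^'n \<Rightarrow> real^'n" where
  "Fop g T w yi \<theta> = (1 / real T) *\<^sub>R (\<Sum>t\<in>{1..int T}. (g (w t \<bullet> \<theta>) - yi t) *\<^sub>R w t)"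

definition l1norm :: "real^'n \<Rightarrow> real" where
  "l1norm v = (\<Sum>k\<in>UNIV. \<bar>v $ k\<bar>)"

end

theory Submission
  imports Defs
begin


lemma bern_aux:
  fixes p c :: real assumes "0 \<le> p" "p \<le> 1" "0 \<le> c"
  shows "exp (-c*p) * (1 + p*(exp c - 1)) \<le> exp (c^2/8)"
proof -
  have pos: "1 + p*(exp c - 1) > 0" using assms by (intro add_pos_nonneg) auto
  have "-c*p + ln (1 + p*(exp c - 1)) \<le> c^2/8"
    using Hoeffdings_lemma_aux[of c p] assms by simp
  hence "exp (-c*p + ln (1 + p*(exp c - 1))) \<le> exp (c^2/8)" by (simp only: exp_le_cancel_iff)
  thus ?thesis unfolding exp_add exp_ln[OF pos] .
qed

lemma bern:
  fixes p c :: real assumes "0 \<le> p" "p \<le> 1"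
  shows "exp (-c*p) * (1 + p*(exp c - 1)) \<le> exp (c^2/8)"
proof (cases "c \<ge> 0")
  case True then show ?thesis using bern_aux assms by blast
next
  case False
  have "exp (-(-c)*(1-p)) * (1 + (1-p)*(exp (-c) - 1)) \<le> exp ((-c)^2/8)"
    using bern_aux[of "1-p" "-c"] assms False by simp
  moreover have "exp (-(-c)*(1-p)) * (1 + (1-p)*(exp (-c) - 1)) = exp (-c*p) * (1 + p*(exp c - 1))"
  proof -
    have "exp (-(-c)*(1-p)) = exp c * exp (-c*p)" by (simp add: exp_add[symmetric] algebra_simps)
    moreover have "exp c * (1 + (1-p)*(exp (-c) - 1)) = 1 + p*(exp c - 1)"
    proof -
      have e: "exp c * exp (-c) = 1" by (rule exp_minus_inverse)
      have "exp c * (1 + (1-p)*(exp (-c) - 1)) = exp c + (1-p)*(exp c * exp (-c)) - (1-p) * exp c"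
        by (simp add: algebra_simps)
      also have "\<dots> = 1 + p*(exp c - 1)" unfolding e by (simp add: algebra_simps)
      finally show ?thesis .
    qed
    ultimately show ?thesis by (metis mult.assoc mult.commute)
  qed
  ultimately show ?thesis by simp
qed



lemma mgf_bound:
  fixes M :: "'a measure" and Fs :: "int \<Rightarrow> 'a measure" and Y p c :: "int \<Rightarrow> 'a \<Rightarrow> real"
    and C :: real and T :: nat
  assumes P: "prob_space M" and C0: "0 \<le> C"
  and sub: "\<forall>t\<in>{1..int T}. subalgebra M (Fs (t-1))"
  and Ymeas: "\<forall>t\<in>{1..int T}. Y t \<in> borel_measurable M"
  and Ypast: "\<forall>t\<in>{1..int T}. \<forall>s\<in>{1..t-1}. Y s \<in> borel_measurable (Fs (t-1))"
  and pmeas: "\<forall>t\<in>{1..int T}. \<forall>s\<in>{1..t}. p s \<in> borel_measurable (Fs (t-1)) \<and> c s \<in> borel_measurable (Fs (t-1))"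
  and Ybin: "\<forall>t\<in>{1..int T}. \<forall>\<omega>\<in>space M. Y t \<omega> \<in> {0,1}"
  and prange: "\<forall>t\<in>{1..int T}. \<forall>\<omega>\<in>space M. 0 \<le> p t \<omega> \<and> p t \<omega> \<le> 1"
  and cbound: "AE \<omega> in M. \<forall>t\<in>{1..int T}. \<bar>c t \<omega>\<bar> \<le> C"
  and ce: "\<forall>t\<in>{1..int T}. AE \<omega> in M. real_cond_exp M (Fs (t-1)) (indicator {\<omega>\<in>space M. Y t \<omega> = 1}) \<omega> = p t \<omega>"
  shows "n \<le> T \<Longrightarrow> integrable M (\<lambda>\<omega>. exp (\<Sum>t\<in>{1..int n}. c t \<omega> * (Y t \<omega> - p t \<omega>)))
     \<and> (\<integral>\<omega>. exp (\<Sum>t\<in>{1..int n}. c t \<omega> * (Y t \<omega> - p t \<omega>)) \<partial>M) \<le> exp (real n * C^2/8)"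
proof (induction n)
  case 0
  interpret prob_space M by (rule P)
  show ?case by (simp add: prob_space)
next
  case (Suc n)
  interpret prob_space M by (rule P)
  define t where "t = int n + 1"
  have t: "t \<in> {1..int T}" using Suc.prems by (simp add: t_def)
  have tn: "t - 1 = int n" by (simp add: t_def)
  define F where "F = Fs (int n)"
  have subF: "subalgebra M F" using sub t tn F_def by metis
  interpret S: sigma_finite_subalgebra M F
    by (rule finite_measure_subalgebra_is_sigma_finite)
       (simp add: finite_measure_subalgebra_def finite_measure_subalgebra_axioms_def subF finite_measure_axioms)
  define Sn where "Sn = (\<lambda>\<omega>. \<Sum>s\<in>{1..int n}. c s \<omega> * (Y s \<omega> - p s \<omega>))"
  from Suc.IH Suc.prems have IH: "integrable M (\<lambda>\<omega>. exp (Sn \<omega>))" "(\<integral>\<omega>. exp (Sn \<omega>) \<partial>M) \<le> exp (real n * C^2/8)"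
    by (auto simp: Sn_def)
  have mF: "Y s \<in> borel_measurable F \<and> p s \<in> borel_measurable F \<and> c s \<in> borel_measurable F" if "s \<in> {1..int n}" for s
  proof -
    have "s \<in> {1..t-1}" "s \<in> {1..t}" using that tn by auto
    then show ?thesis using Ypast[rule_format, OF t] pmeas[rule_format, OF t] unfolding F_def tn by auto
  qed
  have [measurable]: "Sn \<in> borel_measurable F" unfolding Sn_def
  proof (intro borel_measurable_sum)
    fix s assume "s \<in> {1..int n}"
    then have [measurable]: "Y s \<in> borel_measurable F" "p s \<in> borel_measurable F" "c s \<in> borel_measurable F"
      using mF by auto
    show "(\<lambda>x. c s x * (Y s x - p s x)) \<in> borel_measurable F" by measurable
  qed
  have [measurable]: "p t \<in> borel_measurable F" "c t \<in> borel_measurable F"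
    using pmeas[rule_format, OF t, of t] t unfolding F_def tn by auto
  have [measurable]: "Y t \<in> borel_measurable M" using Ymeas t by auto
  define h where "h = (\<lambda>\<omega>. exp (Sn \<omega>) * exp (- c t \<omega> * p t \<omega>))"
  define e where "e = (\<lambda>\<omega>. exp (c t \<omega>) - 1)"
  define ind :: "'a \<Rightarrow> real" where "ind = indicator {\<omega>\<in>space M. Y t \<omega> = 1}"
  have [measurable]: "h \<in> borel_measurable F" "e \<in> borel_measurable F" unfolding h_def e_def by measurable
  have [measurable]: "ind \<in> borel_measurable M" unfolding ind_def by measurable
  have mM[measurable]: "h \<in> borel_measurable M" "e \<in> borel_measurable M" "Sn \<in> borel_measurable M"
     "p t \<in> borel_measurable M" "c t \<in> borel_measurable M"
    by (auto intro: measurable_from_subalg[OF subF])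
  have eq1: "exp (\<Sum>s\<in>{1..int (Suc n)}. c s \<omega> * (Y s \<omega> - p s \<omega>)) = h \<omega> + h \<omega> * e \<omega> * ind \<omega>"
    if "\<omega> \<in> space M" for \<omega>
  proof -
    have set: "{1..int (Suc n)} = insert t {1..int n}" by (auto simp: t_def)
    have s1: "(\<Sum>s\<in>{1..int (Suc n)}. c s \<omega> * (Y s \<omega> - p s \<omega>)) = c t \<omega> * (Y t \<omega> - p t \<omega>) + Sn \<omega>"
      unfolding set Sn_def by (subst sum.insert) (auto simp: t_def)
    have s2: "exp (c t \<omega> * (Y t \<omega> - p t \<omega>)) = exp (- c t \<omega> * p t \<omega>) * (1 + e \<omega> * ind \<omega>)"
    proof -
      have "Y t \<omega> \<in> {0,1}" using Ybin t that by auto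
      then show ?thesis
        by (auto simp: e_def ind_def that exp_add[symmetric] algebra_simps)
    qed
    show ?thesis unfolding s1 exp_add s2 by (simp add: h_def algebra_simps)
  qed
  define K where "K = exp (real n * C) * exp C * (exp C + 1)"
  have bnd: "AE \<omega> in M. \<bar>h \<omega>\<bar> \<le> K \<and> \<bar>h \<omega> * e \<omega> * ind \<omega>\<bar> \<le> K \<and> \<bar>h \<omega> * e \<omega> * p t \<omega>\<bar> \<le> K
     \<and> exp (- c t \<omega> * p t \<omega>) * (1 + p t \<omega> * (exp (c t \<omega>) - 1)) \<le> exp (C^2/8)"
    using cbound AE_space
  proof eventually_elim
    case (elim \<omega>)
    have pr: "0 \<le> p s \<omega> \<and> p s \<omega> \<le> 1" if "s \<in> {1..int T}" for s using prange that elim by auto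
    have cb: "\<bar>c s \<omega>\<bar> \<le> C" if "s \<in> {1..int T}" for s using elim that by auto
    have yb: "Y s \<omega> \<in> {0,1}" if "s \<in> {1..int T}" for s using Ybin that elim by auto
    have trm: "\<bar>c s \<omega> * (Y s \<omega> - p s \<omega>)\<bar> \<le> C" if "s \<in> {1..int T}" for s
    proof -
      have "\<bar>Y s \<omega> - p s \<omega>\<bar> \<le> 1" using pr[OF that] yb[OF that] by auto
      then have "\<bar>c s \<omega>\<bar> * \<bar>Y s \<omega> - p s \<omega>\<bar> \<le> C * 1"
        using cb[OF that] C0 by (intro mult_mono) auto
      then show ?thesis by (simp add: abs_mult)
    qed
    have "\<bar>Sn \<omega>\<bar> \<le> (\<Sum>s\<in>{1..int n}. \<bar>c s \<omega> * (Y s \<omega> - p s \<omega>)\<bar>)"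
      unfolding Sn_def by (rule sum_abs)
    also have "\<dots> \<le> (\<Sum>s\<in>{1..int n}. C)"
      using t by (intro sum_mono trm) (auto simp: t_def)
    also have "\<dots> = real n * C" by simp
    finally have Snb: "\<bar>Sn \<omega>\<bar> \<le> real n * C" .
    have ct: "\<bar>c t \<omega>\<bar> \<le> C" and pt: "0 \<le> p t \<omega>" "p t \<omega> \<le> 1" using cb[OF t] pr[OF t] by auto
    have e1: "exp (Sn \<omega>) \<le> exp (real n * C)" using Snb by simp
    have "- c t \<omega> * p t \<omega> \<le> \<bar>c t \<omega>\<bar> * p t \<omega>"
      using pt by (intro mult_right_mono) auto
    also have "\<dots> \<le> \<bar>c t \<omega>\<bar> * 1" using pt by (intro mult_left_mono) auto
    finally have "- c t \<omega> * p t \<omega> \<le> \<bar>c t \<omega>\<bar> * 1" .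
    then have e2: "exp (- c t \<omega> * p t \<omega>) \<le> exp C" using ct by simp
    have hb: "\<bar>h \<omega>\<bar> \<le> exp (real n * C) * exp C"
      unfolding h_def using e1 e2 by (simp add: mult_mono)
    have eb: "\<bar>e \<omega>\<bar> \<le> exp C + 1"
    proof -
      have "exp (c t \<omega>) \<le> exp C" using ct by simp
      then show ?thesis unfolding e_def by (smt (verit) exp_gt_zero)
    qed
    have ib: "\<bar>ind \<omega>\<bar> \<le> 1" unfolding ind_def by (simp add: indicator_def)
    have pb: "\<bar>p t \<omega>\<bar> \<le> 1" using pt by simp
    have K0: "0 \<le> exp (real n * C) * exp C" by simp
    have he: "\<bar>h \<omega> * e \<omega>\<bar> \<le> K" unfolding K_def abs_mult
      using hb eb K0 by (intro mult_mono) auto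
    have Kp: "0 \<le> K" unfolding K_def by (intro mult_nonneg_nonneg) (auto intro: add_nonneg_nonneg)
    have "\<bar>h \<omega> * e \<omega>\<bar> * \<bar>ind \<omega>\<bar> \<le> K * 1" using he ib Kp by (intro mult_mono) auto
    moreover have "\<bar>h \<omega> * e \<omega>\<bar> * \<bar>p t \<omega>\<bar> \<le> K * 1" using he pb Kp by (intro mult_mono) auto
    ultimately have b1: "\<bar>h \<omega> * e \<omega> * ind \<omega>\<bar> \<le> K" "\<bar>h \<omega> * e \<omega> * p t \<omega>\<bar> \<le> K"
      by (simp_all only: abs_mult mult_1_right)
    have "exp (real n * C) * exp C * 1 \<le> K" unfolding K_def using K0
      by (intro mult_left_mono) (auto simp: add_increasing)
    then have "\<bar>h \<omega>\<bar> \<le> K" using hb by simp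
    moreover have "exp (- c t \<omega> * p t \<omega>) * (1 + p t \<omega> * (exp (c t \<omega>) - 1)) \<le> exp (C^2/8)"
    proof -
      have "\<bar>c t \<omega>\<bar>^2 \<le> C^2" using ct by (intro power_mono) auto
      then have "(c t \<omega>)^2 \<le> C^2" by simp
      then have "exp ((c t \<omega>)^2/8) \<le> exp (C^2/8)" by simp
      then show ?thesis using bern[OF pt] by (rule order_trans[rotated])
    qed
    ultimately show ?case using b1 by auto
  qed
  have ih: "integrable M h" using bnd by (intro integrable_const_bound[where B=K]) auto
  have ihe: "integrable M (\<lambda>\<omega>. h \<omega> * e \<omega> * ind \<omega>)" using bnd by (intro integrable_const_bound[where B=K]) auto
  have ihp: "integrable M (\<lambda>\<omega>. h \<omega> * e \<omega> * p t \<omega>)" using bnd by (intro integrable_const_bound[where B=K]) auto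
  have ce_t: "AE \<omega> in M. real_cond_exp M F ind \<omega> = p t \<omega>"
    using ce t tn unfolding F_def ind_def by metis
  have int1: "integrable M (\<lambda>\<omega>. exp (\<Sum>s\<in>{1..int (Suc n)}. c s \<omega> * (Y s \<omega> - p s \<omega>)))"
    by (rule Bochner_Integration.integrable_cong[THEN iffD2, OF refl _ Bochner_Integration.integrable_add[OF ih ihe]]) (use eq1 in simp)
  have "(\<integral>\<omega>. exp (\<Sum>s\<in>{1..int (Suc n)}. c s \<omega> * (Y s \<omega> - p s \<omega>)) \<partial>M)
       = (\<integral>\<omega>. h \<omega> + h \<omega> * e \<omega> * ind \<omega> \<partial>M)"
    by (rule Bochner_Integration.integral_cong) (use eq1 in simp_all)
  also have "\<dots> = (\<integral>\<omega>. h \<omega> \<partial>M) + (\<integral>\<omega>. (h \<omega> * e \<omega>) * ind \<omega> \<partial>M)"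
    using ih ihe by simp
  also have "(\<integral>\<omega>. (h \<omega> * e \<omega>) * ind \<omega> \<partial>M) = (\<integral>\<omega>. (h \<omega> * e \<omega>) * real_cond_exp M F ind \<omega> \<partial>M)"
    by (rule S.real_cond_exp_intg(2)[symmetric]) (use ihe in auto)
  also have "\<dots> = (\<integral>\<omega>. h \<omega> * e \<omega> * p t \<omega> \<partial>M)"
    by (rule integral_cong_AE) (use ce_t in auto)
  also have "(\<integral>\<omega>. h \<omega> \<partial>M) + \<dots> = (\<integral>\<omega>. h \<omega> + h \<omega> * e \<omega> * p t \<omega> \<partial>M)"
    using ih ihp by simp
  also have "\<dots> = (\<integral>\<omega>. exp (Sn \<omega>) * (exp (- c t \<omega> * p t \<omega>) * (1 + p t \<omega> * (exp (c t \<omega>) - 1))) \<partial>M)"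
    by (rule Bochner_Integration.integral_cong) (auto simp: h_def e_def algebra_simps)
  also have "\<dots> \<le> (\<integral>\<omega>. exp (Sn \<omega>) * exp (C^2/8) \<partial>M)"
  proof (rule integral_mono_AE)
    show "integrable M (\<lambda>\<omega>. exp (Sn \<omega>) * (exp (- c t \<omega> * p t \<omega>) * (1 + p t \<omega> * (exp (c t \<omega>) - 1))))"
      by (rule Bochner_Integration.integrable_cong[THEN iffD2, OF refl _ Bochner_Integration.integrable_add[OF ih ihp]]) (simp add: h_def e_def algebra_simps)
    show "integrable M (\<lambda>\<omega>. exp (Sn \<omega>) * exp (C^2/8))" using IH(1) by simp
    show "AE \<omega> in M. exp (Sn \<omega>) * (exp (- c t \<omega> * p t \<omega>) * (1 + p t \<omega> * (exp (c t \<omega>) - 1))) \<le> exp (Sn \<omega>) * exp (C^2/8)"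
      using bnd by eventually_elim simp
  qed
  also have "\<dots> = (\<integral>\<omega>. exp (Sn \<omega>) \<partial>M) * exp (C^2/8)" by simp
  also have "\<dots> \<le> exp (real n * C^2/8) * exp (C^2/8)" using IH(2) by simp
  also have "\<dots> = exp (real (Suc n) * C^2/8)" by (simp add: exp_add[symmetric] field_simps)
  finally show ?case using int1 by simp
qed



lemma sym_inner:
  fixes A :: "real^'n^'n"
  assumes "transpose A = A"
  shows "(A *v x) \<bullet> y = x \<bullet> (A *v y)"
proof -
  have "A *v x = x v* A" using transpose_matrix_vector[of A x] assms by simp
  then show ?thesis by (simp add: dot_lmul_matrix)
qed

lemma eig_finite:
  fixes A :: "real^'n^'n"
  assumes sym: "transpose A = A"
  shows "finite {k. is_eigenvalue A k}"
proof -
  define S where "S = {k. is_eigenvalue A k}"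
  define v where "v = (\<lambda>k. SOME u. u \<noteq> 0 \<and> A *v u = k *\<^sub>R u)"
  have v: "v k \<noteq> 0 \<and> A *v v k = k *\<^sub>R v k" if "k \<in> S" for k
    using that unfolding S_def is_eigenvalue_def v_def by (metis (mono_tags, lifting) someI_ex mem_Collect_eq)
  have inj: "inj_on v S"
  proof (rule inj_onI)
    fix k1 k2 assume a: "k1 \<in> S" "k2 \<in> S" "v k1 = v k2"
    then have "k1 *\<^sub>R v k1 = k2 *\<^sub>R v k1" using v[OF a(1)] v[OF a(2)] by metis
    then show "k1 = k2" using v[OF a(1)] by simp
  qed
  have orth: "pairwise orthogonal (v ` S)"
  proof (clarsimp simp: pairwise_def orthogonal_def)
    fix k1 k2 assume a: "k1 \<in> S" "k2 \<in> S" "v k1 \<noteq> v k2"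
    then have ne: "k1 \<noteq> k2" by auto
    have "k1 * (v k1 \<bullet> v k2) = (A *v v k1) \<bullet> v k2" using v[OF a(1)] by simp
    also have "\<dots> = v k1 \<bullet> (A *v v k2)" by (rule sym_inner[OF sym])
    also have "\<dots> = k2 * (v k1 \<bullet> v k2)" using v[OF a(2)] by simp
    finally show "v k1 \<bullet> v k2 = 0" using ne by simp
  qed
  have "0 \<notin> v ` S" using v by auto
  then have "independent (v ` S)" using orth by (rule pairwise_orthogonal_independent[rotated])
  then have "finite (v ` S)" using independent_bound by blast
  then show ?thesis using inj finite_imageD S_def by blast
qed

lemma quad_scale:
  fixes A :: "real^'n^'n"
  shows "(c *\<^sub>R x) \<bullet> (A *v (c *\<^sub>R x)) = c^2 * (x \<bullet> (A *v x))"
  by (simp add: matrix_vector_mult_scaleR power2_eq_square)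

lemma rayleigh:
  fixes A :: "real^'n^'n"
  assumes sym: "transpose A = A"
  shows "\<exists>\<mu>. is_eigenvalue A \<mu> \<and> (\<forall>x. \<mu> * (norm x)^2 \<le> x \<bullet> (A *v x))"
proof -
  define q where "q = (\<lambda>x::real^'n. x \<bullet> (A *v x))"
  have cont: "continuous_on (sphere 0 1) q" unfolding q_def
    by (intro continuous_intros linear_continuous_on) auto
  have ne: "sphere (0::real^'n) 1 \<noteq> {}" using vector_choose_size[of 1] by auto
  obtain u where u: "u \<in> sphere 0 1" "\<And>y. y \<in> sphere 0 1 \<Longrightarrow> q u \<le> q y"
    using continuous_attains_inf[OF compact_sphere ne cont] by blast
  define \<mu> where "\<mu> = q u"
  have nu: "norm u = 1" using u(1) by simp
  have low: "\<mu> * (norm x)^2 \<le> q x" for x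
  proof (cases "x = 0")
    case True then show ?thesis by (simp add: q_def)
  next
    case False
    define y where "y = (1 / norm x) *\<^sub>R x"
    have "y \<in> sphere 0 1" using False by (simp add: y_def)
    then have "\<mu> \<le> q y" using u(2) \<mu>_def by simp
    also have "q y = (1/norm x)^2 * q x" unfolding y_def q_def by (rule quad_scale)
    finally have "\<mu> \<le> (1/norm x)^2 * q x" .
    then have "\<mu> * (norm x)^2 \<le> (1/norm x)^2 * q x * (norm x)^2"
      by (intro mult_right_mono) auto
    also have "\<dots> = q x" using False by (simp add: field_simps)
    finally show ?thesis .
  qed
  define r where "r = A *v u - \<mu> *\<^sub>R u"
  define d where "d = q r - \<mu> * (norm r)^2"
  have d0: "0 \<le> d" using low[of r] by (simp add: d_def)
  have key: "0 \<le> 2 * s * (r \<bullet> r) + s^2 * d" for s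
  proof -
    have "\<mu> * (norm (u + s *\<^sub>R r))^2 \<le> q (u + s *\<^sub>R r)" by (rule low)
    moreover have "q (u + s *\<^sub>R r) = q u + 2 * s * (r \<bullet> (A *v u)) + s^2 * q r"
    proof -
      have "u \<bullet> (A *v r) = r \<bullet> (A *v u)" using sym_inner[OF sym, of r u] by (simp add: inner_commute)
      then show ?thesis unfolding q_def
        by (simp add: matrix_vector_right_distrib matrix_vector_mult_scaleR inner_add_left inner_add_right
            power2_eq_square algebra_simps inner_commute)
    qed
    moreover have "(norm (u + s *\<^sub>R r))^2 = 1 + 2 * s * (u \<bullet> r) + s^2 * (norm r)^2"
    proof -
      have uu: "u \<bullet> u = 1" using nu power2_norm_eq_inner[of u] by simp
      show ?thesis unfolding power2_norm_eq_inner
        by (simp add: uu inner_add_left inner_add_right power2_eq_square algebra_simps inner_commute)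
    qed
    moreover have "r \<bullet> (A *v u) - \<mu> * (u \<bullet> r) = r \<bullet> r"
      by (simp add: r_def inner_diff_left inner_diff_right inner_commute algebra_simps)
    ultimately show ?thesis unfolding d_def \<mu>_def
      by (simp add: algebra_simps power2_eq_square)
  qed
  have "r = 0"
  proof (rule ccontr)
    assume "r \<noteq> 0"
    define m where "m = r \<bullet> r"
    have m0: "m > 0" using \<open>r \<noteq> 0\<close> by (simp add: m_def)
    define s where "s = - m / (d + 1)"
    have s0: "s < 0" using m0 d0 by (simp add: s_def divide_pos_pos)
    have q1: "d / (d+1) < 1" using d0 by simp
    have "s * d = - m * (d / (d+1))" by (simp add: s_def)
    moreover have "m * (d / (d+1)) < m * 1" using q1 m0 by (intro mult_strict_left_mono) auto
    ultimately have "2 * m + s * d > m" by simp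
    then have "s * (2 * m + s * d) < 0" using s0 m0 by (intro mult_neg_pos) auto
    moreover have "2 * s * m + s^2 * d = s * (2 * m + s * d)" by (simp add: algebra_simps power2_eq_square)
    ultimately have "2 * s * m + s^2 * d < 0" by simp
    then show False using key[of s] m_def by simp
  qed
  then have "A *v u = \<mu> *\<^sub>R u" by (simp add: r_def)
  moreover have "u \<noteq> 0" using nu by auto
  ultimately have "is_eigenvalue A \<mu>" unfolding is_eigenvalue_def by blast
  then show ?thesis using low unfolding q_def by blast
qed

lemma lambda_min_le:
  fixes A :: "real^'n^'n"
  assumes sym: "transpose A = A"
  shows "lambda_min A * (norm x)^2 \<le> x \<bullet> (A *v x)"
proof -
  obtain \<mu> where m: "is_eigenvalue A \<mu>" "\<forall>x. \<mu> * (norm x)^2 \<le> x \<bullet> (A *v x)"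
    using rayleigh[OF sym] by blast
  have "lambda_min A \<le> \<mu>" unfolding lambda_min_def
    using eig_finite[OF sym] m(1) by (intro Min_le) auto
  then have "lambda_min A * (norm x)^2 \<le> \<mu> * (norm x)^2" by (intro mult_right_mono) auto
  then show ?thesis using m(2) by (meson order_trans)
qed



lemma g_strong:
  fixes g g' :: "real \<Rightarrow> real"
  assumes mono: "mono g" and der: "\<forall>u. (g has_real_derivative g' u) (at u)"
    and low: "\<forall>u. \<bar>u\<bar> \<le> R \<longrightarrow> m \<le> \<bar>g' u\<bar>"
    and a: "\<bar>a\<bar> \<le> R" and b: "\<bar>b\<bar> \<le> R"
  shows "m * (a - b)^2 \<le> (g a - g b) * (a - b)"
proof -
  have main: "m * (a - b)^2 \<le> (g a - g b) * (a - b)" if ab: "b < a" "\<bar>a\<bar> \<le> R" "\<bar>b\<bar> \<le> R" for a b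
  proof -
    obtain z where z: "b < z" "z < a" "g a - g b = (a - b) * g' z"
      using MVT2[OF ab(1), of g g'] der by blast
    have "g b \<le> g a" using mono ab(1) by (simp add: monoD)
    then have "0 \<le> (a - b) * g' z" using z by simp
    then have "0 \<le> g' z" using ab(1) by (simp add: zero_le_mult_iff)
    moreover have "\<bar>z\<bar> \<le> R" using z ab by auto
    ultimately have "m \<le> g' z" using low by auto
    then have "m * (a-b)^2 \<le> g' z * (a-b)^2" by (intro mult_right_mono) auto
    also have "\<dots> = (g a - g b) * (a - b)" using z by (simp add: power2_eq_square)
    finally show ?thesis .
  qed
  consider "b < a" | "a < b" | "a = b" by linarith
  then show ?thesis
  proof cases
    case 1 then show ?thesis using main a b by blast
  next
    case 2 then have "m * (b - a)^2 \<le> (g b - g a) * (b - a)" using main a b by blast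
    then show ?thesis by (simp add: power2_commute algebra_simps)
  qed simp
qed

lemma outer_mult: "outer v *v D = (v \<bullet> D) *\<^sub>R v"
  by (simp add: vec_eq_iff outer_def matrix_vector_mult_def inner_vec_def sum_distrib_left algebra_simps)

lemma sum_mat_mult: "finite S \<Longrightarrow> (\<Sum>t\<in>S. A t) *v x = (\<Sum>t\<in>S. A t *v x)"
  for A :: "'b \<Rightarrow> real^'n^'m"
  by (induct rule: finite_induct) (auto simp: matrix_vector_mult_add_rdistrib)

lemma Wmat_quad:
  "D \<bullet> (Wmat T w *v D) = (1 / real T) * (\<Sum>t\<in>{1..int T}. (w t \<bullet> D)^2)"
proof -
  have "Wmat T w *v D = (1 / real T) *\<^sub>R ((\<Sum>t\<in>{1..int T}. outer (w t)) *v D)"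
    unfolding Wmat_def by (simp add: scaleR_matrix_vector_assoc)
  also have "\<dots> = (1 / real T) *\<^sub>R (\<Sum>t\<in>{1..int T}. (w t \<bullet> D) *\<^sub>R w t)"
    by (simp add: sum_mat_mult outer_mult)
  finally show ?thesis
    by (simp add: inner_sum_right power2_eq_square inner_commute)
qed

lemma Wmat_sym: "transpose (Wmat T w) = Wmat T w"
  by (simp add: vec_eq_iff transpose_def Wmat_def outer_def mult.commute)



lemma l1_bdd:
  fixes \<Theta> :: "(real^'n) set" assumes "compact \<Theta>"
  shows "bdd_above (l1norm ` \<Theta>)"
proof -
  obtain B where B: "\<forall>x\<in>\<Theta>. norm x \<le> B" using compact_imp_bounded[OF assms] bounded_iff by blast
  have "l1norm x \<le> real CARD('n) * B" if "x \<in> \<Theta>" for x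
  proof -
    have "l1norm x \<le> (\<Sum>k\<in>(UNIV::'n set). B)" unfolding l1norm_def
      by (intro Groups_Big.sum_mono) (meson B that component_le_norm_cart order_trans)
    then show ?thesis by simp
  qed
  then show ?thesis by (intro bdd_aboveI[where M="real CARD('n) * B"]) auto
qed

lemma inner_bound:
  fixes w \<theta> :: "real^'n"
  assumes "\<forall>n. \<bar>w $ n\<bar> \<le> M" "0 \<le> M"
  shows "\<bar>w \<bullet> \<theta>\<bar> \<le> M * l1norm \<theta>"
proof -
  have "\<bar>w \<bullet> \<theta>\<bar> = \<bar>\<Sum>k\<in>UNIV. w $ k * \<theta> $ k\<bar>" by (simp add: inner_vec_def)
  also have "\<dots> \<le> (\<Sum>k\<in>UNIV. \<bar>w $ k * \<theta> $ k\<bar>)" by (rule sum_abs)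
  also have "\<dots> \<le> (\<Sum>k\<in>UNIV. M * \<bar>\<theta> $ k\<bar>)"
    using assms by (intro sum_mono) (auto simp: abs_mult intro: mult_right_mono)
  also have "\<dots> = M * l1norm \<theta>" by (simp add: l1norm_def sum_distrib_left)
  finally show ?thesis .
qed

lemma Fop_diff_inner:
  "(Fop g T w yv a - Fop g T w yv b) \<bullet> D = (1 / real T) * (\<Sum>t\<in>{1..int T}. (g (w t \<bullet> a) - g (w t \<bullet> b)) * (w t \<bullet> D))"
  unfolding Fop_def
  by (simp add: scaleR_diff_right[symmetric] sum_subtractf[symmetric] inner_sum_left algebra_simps)

lemma vi_bound:
  fixes w :: "int \<Rightarrow> real^'n" and yv :: "int \<Rightarrow> real" and \<theta>s \<theta>h :: "real^'n" and \<Theta> :: "(real^'n) set"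
    and g g' :: "real \<Rightarrow> real"
  assumes T: "T \<ge> 1" and cvx: "convex \<Theta>" and cpt: "compact \<Theta>" and ts: "\<theta>s \<in> \<Theta>" and th: "\<theta>h \<in> \<Theta>"
   and VI: "\<forall>\<theta>\<in>\<Theta>. Fop g T w yv \<theta> \<bullet> (\<theta> - \<theta>h) \<ge> 0"
   and mono: "mono g" and der: "\<forall>u. (g has_real_derivative g' u) (at u)"
   and low: "\<forall>u. \<bar>u\<bar> \<le> M_w * (SUP \<theta>\<in>\<Theta>. l1norm \<theta>) \<longrightarrow> m_g \<le> \<bar>g' u\<bar>"
   and wb: "\<forall>t\<in>{1..int T}. \<forall>n. \<bar>w t $ n\<bar> \<le> M_w" and Mw: "0 \<le> M_w" and mg: "0 < m_g"
   and lam: "0 < lambda_min (Wmat T w)"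
  shows "m_g * lambda_min (Wmat T w) * norm (\<theta>h - \<theta>s) \<le> norm (Fop g T w yv \<theta>s)"
proof -
  define R where "R = M_w * (SUP \<theta>\<in>\<Theta>. l1norm \<theta>)"
  define \<kappa> where "\<kappa> = m_g * lambda_min (Wmat T w)"
  have \<kappa>0: "\<kappa> > 0" using mg lam by (simp add: \<kappa>_def)
  have wt: "\<bar>w t \<bullet> \<theta>\<bar> \<le> R" if "\<theta> \<in> \<Theta>" "t \<in> {1..int T}" for \<theta> t
  proof -
    have "\<bar>w t \<bullet> \<theta>\<bar> \<le> M_w * l1norm \<theta>" using wb that Mw by (intro inner_bound) auto
    also have "\<dots> \<le> R" unfolding R_def using Mw l1_bdd[OF cpt] that
      by (intro mult_left_mono cSUP_upper) auto
    finally show ?thesis .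
  qed
  have strong: "\<kappa> * (norm (a - b))^2 \<le> (Fop g T w yv a - Fop g T w yv b) \<bullet> (a - b)"
    if "a \<in> \<Theta>" "b \<in> \<Theta>" for a b
  proof -
    have "\<kappa> * (norm (a - b))^2 \<le> m_g * ((a - b) \<bullet> (Wmat T w *v (a - b)))"
      unfolding \<kappa>_def mult.assoc using mg by (intro mult_left_mono lambda_min_le Wmat_sym) auto
    also have "\<dots> = (1 / real T) * (\<Sum>t\<in>{1..int T}. m_g * (w t \<bullet> (a - b))^2)"
      by (simp add: Wmat_quad sum_distrib_left)
    also have "\<dots> \<le> (1 / real T) * (\<Sum>t\<in>{1..int T}. (g (w t \<bullet> a) - g (w t \<bullet> b)) * (w t \<bullet> (a - b)))"
    proof (intro mult_left_mono sum_mono)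
      fix t assume t: "t \<in> {1..int T}"
      show "m_g * (w t \<bullet> (a - b))^2 \<le> (g (w t \<bullet> a) - g (w t \<bullet> b)) * (w t \<bullet> (a - b))"
        using g_strong[OF mono der, of R m_g "w t \<bullet> a" "w t \<bullet> b"] low wt[OF that(1) t] wt[OF that(2) t]
        unfolding R_def by (simp add: inner_diff_right)
    qed simp
    also have "\<dots> = (Fop g T w yv a - Fop g T w yv b) \<bullet> (a - b)" by (simp add: Fop_diff_inner)
    finally show ?thesis .
  qed
  define D where "D = \<theta>s - \<theta>h"
  define F0 where "F0 = Fop g T w yv \<theta>s"
  have step: "\<kappa> * (1 - s) * (norm D)^2 \<le> norm F0 * norm D" if s: "0 < s" "s < 1" for s
  proof -
    define \<theta>' where "\<theta>' = (1 - s) *\<^sub>R \<theta>h + s *\<^sub>R \<theta>s"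
    have in': "\<theta>' \<in> \<Theta>" unfolding \<theta>'_def using cvx th ts s by (intro convexD) auto
    have d1: "\<theta>' - \<theta>h = s *\<^sub>R D" by (simp add: \<theta>'_def D_def algebra_simps)
    have d2: "\<theta>s - \<theta>' = (1 - s) *\<^sub>R D" by (simp add: \<theta>'_def D_def algebra_simps)
    have "0 \<le> Fop g T w yv \<theta>' \<bullet> (s *\<^sub>R D)" using VI in' d1 by metis
    then have v1: "0 \<le> Fop g T w yv \<theta>' \<bullet> D" using s by (simp add: zero_le_mult_iff)
    have A: "\<kappa> * (norm ((1 - s) *\<^sub>R D))^2 \<le> (F0 - Fop g T w yv \<theta>') \<bullet> ((1 - s) *\<^sub>R D)"
      using strong[OF ts in'] d2 unfolding F0_def by metis
    have eq2: "(F0 - Fop g T w yv \<theta>') \<bullet> ((1 - s) *\<^sub>R D) = (1 - s) * (F0 \<bullet> D - Fop g T w yv \<theta>' \<bullet> D)"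
      by (simp only: inner_scaleR_right inner_diff_left)
    have eq3: "\<kappa> * (norm ((1 - s) *\<^sub>R D))^2 = \<kappa> * ((1 - s) * (1 - s)) * (norm D)^2"
      using s by (simp add: power2_eq_square)
    from A have "\<kappa> * ((1 - s) * (1 - s)) * (norm D)^2 \<le> (1 - s) * (F0 \<bullet> D - Fop g T w yv \<theta>' \<bullet> D)"
      unfolding eq2 eq3 .
    also have "\<dots> \<le> (1 - s) * (F0 \<bullet> D)" using v1 s by (intro mult_left_mono) auto
    finally have "(1 - s) * (\<kappa> * (1 - s) * (norm D)^2) \<le> (1 - s) * (F0 \<bullet> D)" by (simp add: algebra_simps)
    then have "\<kappa> * (1 - s) * (norm D)^2 \<le> F0 \<bullet> D" using s by simp
    also have "\<dots> \<le> norm F0 * norm D" by (rule Cauchy_Schwarz_ineq2[THEN order_trans[OF abs_ge_self]])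
    finally show ?thesis .
  qed
  have fin: "\<kappa> * (norm D)^2 \<le> norm F0 * norm D"
  proof (rule ccontr)
    assume "\<not> ?thesis"
    then have gt: "\<kappa> * (norm D)^2 > norm F0 * norm D" by simp
    define X where "X = \<kappa> * (norm D)^2"
    define Yv where "Yv = norm F0 * norm D"
    have Y0: "0 \<le> Yv" by (simp add: Yv_def)
    define s where "s = (X - Yv) / (2 * X)"
    have X0: "X > 0" using gt Y0 X_def Yv_def by linarith
    have XY: "Yv < X" using gt by (simp add: X_def Yv_def mult.commute)
    have s0: "0 < s" "s < 1" using X0 XY Y0 unfolding s_def by (auto simp: field_simps)
    have e1: "(1 - s) * X = (X + Yv) / 2" using X0 by (simp add: s_def field_simps)
    have "\<kappa> * (1 - s) * (norm D)^2 = (1 - s) * X" unfolding X_def by (simp add: algebra_simps)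
    then have "\<kappa> * (1 - s) * (norm D)^2 = (X + Yv) / 2" using e1 by simp
    then show False using step[OF s0] gt Yv_def X_def by simp
  qed
  show ?thesis
  proof (cases "norm D = 0")
    case True then show ?thesis by (simp add: D_def F0_def)
  next
    case False
    then have "0 < norm D" by simp
    then have "\<kappa> * norm D \<le> norm F0" using fin by (simp add: power2_eq_square mult.assoc[symmetric])
    then show ?thesis by (simp add: \<kappa>_def D_def F0_def norm_minus_commute)
  qed
qed



lemma past_space: "space (past_sigma M N1 N2 N3 d z x y s) = space M"
  unfolding past_sigma_def by (rule space_measure_of_conv)

lemma past_sets: "sets (past_sigma M N1 N2 N3 d z x y s) =
   sigma_sets (space M) {X -` B \<inter> space M | X B. X \<in> obs_vars N1 N2 N3 d z x y s \<and> B \<in> sets borel}"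
  unfolding past_sigma_def by (rule sets_measure_of) auto

lemma obs_in_past:
  assumes "X \<in> obs_vars N1 N2 N3 d z x y s"
  shows "X \<in> borel_measurable (past_sigma M N1 N2 N3 d z x y s)"
proof (rule measurableI)
  fix A :: "real set" assume "A \<in> sets borel"
  then show "X -` A \<inter> space (past_sigma M N1 N2 N3 d z x y s) \<in> sets (past_sigma M N1 N2 N3 d z x y s)"
    unfolding past_space past_sets using assms by (intro sigma_sets.Basic) blast
qed auto

lemma obs_mono: "s \<le> s' \<Longrightarrow> obs_vars N1 N2 N3 d z x y s \<subseteq> obs_vars N1 N2 N3 d z x y s'"
  unfolding obs_vars_def by fastforce

lemma obs_meas:
  assumes meas_z: "\<forall>a\<in>{1..N3}. z a \<in> borel_measurable M"
    and meas_x: "\<forall>j\<in>{1..N2}. \<forall>t\<in>{1 - int d..int T}. x j t \<in> borel_measurable M"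
    and meas_y: "\<forall>k\<in>{1..N1}. \<forall>t\<in>{1 - int d..int T}. y k t \<in> borel_measurable M"
    and s: "s \<le> int T" and X: "X \<in> obs_vars N1 N2 N3 d z x y s"
  shows "X \<in> borel_measurable M"
  using X s meas_z meas_x meas_y unfolding obs_vars_def by auto

lemma past_sub:
  assumes meas_z: "\<forall>a\<in>{1..N3}. z a \<in> borel_measurable M"
    and meas_x: "\<forall>j\<in>{1..N2}. \<forall>t\<in>{1 - int d..int T}. x j t \<in> borel_measurable M"
    and meas_y: "\<forall>k\<in>{1..N1}. \<forall>t\<in>{1 - int d..int T}. y k t \<in> borel_measurable M"
    and s: "s \<le> int T"
  shows "subalgebra M (past_sigma M N1 N2 N3 d z x y s)"
  unfolding subalgebra_def past_space past_sets
proof (intro conjI refl sets.sigma_sets_subset subsetI)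
  fix A assume "A \<in> {X -` B \<inter> space M | X B. X \<in> obs_vars N1 N2 N3 d z x y s \<and> B \<in> sets borel}"
  then obtain X B where "A = X -` B \<inter> space M" "X \<in> obs_vars N1 N2 N3 d z x y s" "B \<in> sets borel" by blast
  moreover then have "X \<in> borel_measurable M" using obs_meas[OF meas_z meas_x meas_y s] by blast
  ultimately show "A \<in> sets M" by (simp add: measurable_sets)
qed

lemma wcoord_obs:
  assumes t: "1 \<le> t" and k: "k < dimN N1 N2 N3 d" "k \<noteq> 0"
  shows "(\<lambda>\<omega>. wcoord N1 N2 N3 d z x y t \<omega> k) \<in> obs_vars N1 N2 N3 d z x y (t - 1)"
proof -
  consider "k \<le> N3" | "N3 < k" "k \<le> N3 + d * N2" | "N3 + d * N2 < k" by linarith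
  then show ?thesis
  proof cases
    case 1
    then have "(\<lambda>\<omega>. wcoord N1 N2 N3 d z x y t \<omega> k) = z k" using k by (simp add: wcoord_def fun_eq_iff)
    then show ?thesis using 1 k unfolding obs_vars_def by auto
  next
    case 2
    then have d0: "d > 0" by (cases "d = 0") auto
    define j where "j = (k - N3 - 1) div d + 1"
    define r where "r = t - int ((k - N3 - 1) mod d + 1)"
    have "(k - N3 - 1) < N2 * d" using 2 by (simp add: mult.commute)
    then have "(k - N3 - 1) div d < N2" by (rule less_mult_imp_div_less)
    then have j: "j \<in> {1..N2}" by (simp add: j_def)
    have "(k - N3 - 1) mod d < d" using d0 by simp
    then have r: "r \<in> {1 - int d..t - 1}" using t by (auto simp: r_def)
    have "(\<lambda>\<omega>. wcoord N1 N2 N3 d z x y t \<omega> k) = x j r" using 2 k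
      by (simp add: wcoord_def fun_eq_iff j_def r_def)
    then show ?thesis using j r unfolding obs_vars_def by blast
  next
    case 3
    then have d0: "d > 0" using k by (cases "d = 0") (auto simp: dimN_def)
    define j where "j = (k - N3 - d * N2 - 1) div d + 1"
    define r where "r = t - int ((k - N3 - d * N2 - 1) mod d + 1)"
    have "(k - N3 - d * N2 - 1) < N1 * d" using 3 k by (simp add: dimN_def mult.commute)
    then have "(k - N3 - d * N2 - 1) div d < N1" by (rule less_mult_imp_div_less)
    then have j: "j \<in> {1..N1}" by (simp add: j_def)
    have "(k - N3 - d * N2 - 1) mod d < d" using d0 by simp
    then have r: "r \<in> {1 - int d..t - 1}" using t by (auto simp: r_def)
    have "(\<lambda>\<omega>. wcoord N1 N2 N3 d z x y t \<omega> k) = y j r" using 3 k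
      by (simp add: wcoord_def fun_eq_iff j_def r_def)
    then show ?thesis using j r unfolding obs_vars_def by blast
  qed
qed

lemma wvec_meas:
  assumes idx: "bij_betw idx UNIV {..<dimN N1 N2 N3 d}"
    and t: "1 \<le> t" "t - 1 \<le> s"
  shows "(\<lambda>\<omega>. wvec idx N1 N2 N3 d z x y t \<omega> $ n) \<in> borel_measurable (past_sigma M N1 N2 N3 d z x y s)"
proof (cases "idx n = 0")
  case True
  then show ?thesis by (simp add: wvec_def wcoord_def)
next
  case False
  have "idx n < dimN N1 N2 N3 d" using idx by (auto simp: bij_betw_def)
  then have "(\<lambda>\<omega>. wcoord N1 N2 N3 d z x y t \<omega> (idx n)) \<in> obs_vars N1 N2 N3 d z x y s"
    using wcoord_obs[OF t(1) _ False] obs_mono[OF t(2)] by blast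
  then show ?thesis unfolding wvec_def by (simp add: obs_in_past)
qed

lemma wvec_inner_meas:
  assumes idx: "bij_betw idx UNIV {..<dimN N1 N2 N3 d}"
    and t: "1 \<le> t" "t - 1 \<le> s"
  shows "(\<lambda>\<omega>. wvec idx N1 N2 N3 d z x y t \<omega> \<bullet> \<theta>) \<in> borel_measurable (past_sigma M N1 N2 N3 d z x y s)"
proof -
  have [measurable]: "(\<lambda>\<omega>. wvec idx N1 N2 N3 d z x y t \<omega> $ n) \<in> borel_measurable (past_sigma M N1 N2 N3 d z x y s)" for n
    by (rule wvec_meas[OF idx t])
  show ?thesis unfolding inner_vec_def by measurable
qed

lemma y_meas:
  assumes "i \<in> {1..N1}" "1 \<le> r" "r \<le> s"
  shows "y i r \<in> borel_measurable (past_sigma M N1 N2 N3 d z x y s)"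
  using assms by (intro obs_in_past) (auto simp: obs_vars_def)



lemma chernoff:
  fixes X :: "'a \<Rightarrow> real"
  assumes P: "prob_space M" and int: "integrable M (\<lambda>\<omega>. exp (l * X \<omega>))"
    and B: "(\<integral>\<omega>. exp (l * X \<omega>) \<partial>M) \<le> B" and l: "l > 0" and X[measurable]: "X \<in> borel_measurable M"
  shows "measure M {\<omega>\<in>space M. a \<le> X \<omega>} \<le> B / exp (l * a)"
proof -
  have "{\<omega>\<in>space M. a \<le> X \<omega>} = {\<omega>\<in>space M. exp (l * a) \<le> exp (l * X \<omega>)}"
    using l by auto
  also have "measure M \<dots> \<le> (\<integral>\<omega>. exp (l * X \<omega>) \<partial>M) / exp (l * a)"
    by (rule integral_Markov_inequality_measure[where A="space M"]) (use int in auto)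
  also have "\<dots> \<le> B / exp (l * a)" using B by (simp add: divide_right_mono)
  finally show ?thesis .
qed



theorem theorem1:
  fixes M :: "'a measure"
    and g g' :: "real \<Rightarrow> real" and m_g M_g M_w \<epsilon> :: real
    and N1 N2 N3 d T i :: nat
    and idx :: "'n::finite \<Rightarrow> nat"
    and z :: "nat \<Rightarrow> 'a \<Rightarrow> real"
    and x y :: "nat \<Rightarrow> int \<Rightarrow> 'a \<Rightarrow> real"
    and \<theta>true :: "nat \<Rightarrow> real^'n"
    and \<Theta> :: "(real^'n) set"
    and \<theta>hat :: "'a \<Rightarrow> real^'n"
  assumes P: "prob_space M"
    and idx: "bij_betw idx UNIV {..<dimN N1 N2 N3 d}"
    and meas_z: "\<forall>a\<in>{1..N3}. z a \<in> borel_measurable M"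
    and meas_x: "\<forall>j\<in>{1..N2}. \<forall>t\<in>{1 - int d..int T}. x j t \<in> borel_measurable M"
    and meas_y: "\<forall>k\<in>{1..N1}. \<forall>t\<in>{1 - int d..int T}. y k t \<in> borel_measurable M"
    and binary: "\<forall>k\<in>{1..N1}. \<forall>t\<in>{1 - int d..int T}. \<forall>\<omega>\<in>space M. y k t \<omega> \<in> {0, 1}"
    and g_range: "\<forall>u. 0 \<le> g u \<and> g u \<le> 1"
    and g_cont: "continuous_on UNIV g"
    and g_mono: "mono g"
    and g_deriv: "\<forall>u. (g has_real_derivative g' u) (at u)"
    and mg_pos: "0 < m_g" and Mg_pos: "0 < M_g"
    and g'_upper: "\<forall>u. \<bar>g' u\<bar> \<le> M_g"
    and g'_lower: "\<forall>u. \<bar>u\<bar> \<le> M_w * (SUP \<theta>\<in>\<Theta>. l1norm \<theta>) \<longrightarrow> m_g \<le> \<bar>g' u\<bar>"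
    and model: "\<forall>k\<in>{1..N1}. \<forall>t\<in>{1..int T}. AE \<omega> in M.
        real_cond_exp M (past_sigma M N1 N2 N3 d z x y (t - 1))
          (indicator {\<omega>\<in>space M. y k t \<omega> = 1}) \<omega>
        = g (wvec idx N1 N2 N3 d z x y t \<omega> \<bullet> \<theta>true k)"
    and Mw_pos: "0 < M_w"
    and w_bound: "\<forall>t\<in>{1..int T}. AE \<omega> in M. \<forall>n. \<bar>wvec idx N1 N2 N3 d z x y t \<omega> $ n\<bar> \<le> M_w"
    and i: "i \<in> {1..N1}"
    and \<Theta>_convex: "convex \<Theta>" and \<Theta>_compact: "compact \<Theta>"
    and true_in: "\<theta>true i \<in> \<Theta>"
    and weak_VI: "\<forall>\<omega>\<in>space M. \<theta>hat \<omega> \<in> \<Theta> \<and>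
        (\<forall>\<theta>\<in>\<Theta>. Fop g T (\<lambda>t. wvec idx N1 N2 N3 d z x y t \<omega>) (\<lambda>t. y i t \<omega>) \<theta>
                    \<bullet> (\<theta> - \<theta>hat \<omega>) \<ge> 0)"
    and T_pos: "T \<ge> 1"
    and eps: "0 < \<epsilon>" "\<epsilon> < 1"
  shows "\<exists>A\<in>sets M. measure M A \<ge> 1 - \<epsilon> \<and>
    (\<forall>\<omega>\<in>A. let lam1 = lambda_min (Wmat T (\<lambda>t. wvec idx N1 N2 N3 d z x y t \<omega>)) in
       lam1 > 0 \<longrightarrow>
       norm (\<theta>hat \<omega> - \<theta>true i)
         \<le> M_w / (m_g * lam1) * sqrt (real (dimN N1 N2 N3 d)
              * ln (2 * real (dimN N1 N2 N3 d) / \<epsilon>) / real T))"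
proof -
  interpret prob_space M by (rule P)
  define N where "N = dimN N1 N2 N3 d"
  define W where "W = (\<lambda>t \<omega>. wvec idx N1 N2 N3 d z x y t \<omega>)"
  define Fs where "Fs = past_sigma M N1 N2 N3 d z x y"
  define p where "p = (\<lambda>t \<omega>. g (W t \<omega> \<bullet> \<theta>true i))"
  define Y where "Y = (\<lambda>t. y i t)"
  define L where "L = ln (2 * real N / \<epsilon>)"
  define a where "a = M_w * sqrt (real T * L)"
  define l where "l = 4 * a / (real T * M_w^2)"
  define Sg where "Sg = (\<lambda>n \<omega>. \<Sum>t\<in>{1..int T}. (Y t \<omega> - p t \<omega>) * W t \<omega> $ n)"
  have cardN: "CARD('n) = N" using bij_betw_same_card[OF idx] by (simp add: N_def)
  have N1: "N \<ge> 1" by (simp add: N_def dimN_def)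
  have L0: "L > 0"
  proof -
    have "1 < 2 * real N / \<epsilon>" using N1 eps by (simp add: field_simps)
    then show ?thesis by (simp add: L_def)
  qed
  have T0: "real T > 0" using T_pos by simp
  have a0: "a > 0" using Mw_pos T0 L0 by (simp add: a_def)
  have l0: "l > 0" using a0 T0 Mw_pos by (simp add: l_def)
  have a2: "a^2 = M_w^2 * real T * L" using T0 L0 by (simp add: a_def power_mult_distrib)
  have subT: "subalgebra M (Fs s)" if "s \<le> int T" for s
    unfolding Fs_def by (rule past_sub[OF meas_z meas_x meas_y that])
  have gmeas[measurable]: "g \<in> borel_measurable borel" by (rule borel_measurable_continuous_onI[OF g_cont])
  have Wm: "(\<lambda>\<omega>. W t \<omega> $ n) \<in> borel_measurable (Fs s)" if "1 \<le> t" "t - 1 \<le> s" for t s n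
    unfolding W_def Fs_def by (rule wvec_meas[OF idx that])
  have pm: "p t \<in> borel_measurable (Fs s)" if "1 \<le> t" "t - 1 \<le> s" for t s
  proof -
    have [measurable]: "(\<lambda>\<omega>. W t \<omega> \<bullet> \<theta>true i) \<in> borel_measurable (Fs s)"
      unfolding W_def Fs_def by (rule wvec_inner_meas[OF idx that])
    show ?thesis unfolding p_def by measurable
  qed
  have Ym: "Y r \<in> borel_measurable (Fs s)" if "1 \<le> r" "r \<le> s" for r s
    unfolding Y_def Fs_def using i that by (rule y_meas)
  have SgmT: "Sg n \<in> borel_measurable (Fs (int T))" for n
    unfolding Sg_def
  proof (intro borel_measurable_sum)
    fix t assume t: "t \<in> {1..int T}"
    have [measurable]: "(\<lambda>\<omega>. W t \<omega> $ n) \<in> borel_measurable (Fs (int T))" "p t \<in> borel_measurable (Fs (int T))"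
       "Y t \<in> borel_measurable (Fs (int T))"
      using t by (auto intro!: Wm pm Ym)
    show "(\<lambda>\<omega>. (Y t \<omega> - p t \<omega>) * W t \<omega> $ n) \<in> borel_measurable (Fs (int T))" by measurable
  qed
  have Sgm[measurable]: "Sg n \<in> borel_measurable M" for n
    using measurable_from_subalg[OF subT[of "int T"] SgmT] by simp
  have AEw: "AE \<omega> in M. \<forall>t\<in>{1..int T}. \<forall>n. \<bar>W t \<omega> $ n\<bar> \<le> M_w"
    using w_bound unfolding W_def by (intro eventually_ball_finite) auto
  have tail: "measure M {\<omega>\<in>space M. a \<le> \<sigma> * Sg n \<omega>} \<le> \<epsilon> / (2 * real N)" if \<sigma>: "\<sigma> = 1 \<or> \<sigma> = -1" for \<sigma> n
  proof -
    define c where "c = (\<lambda>t \<omega>. (\<sigma> * l) * W t \<omega> $ n)"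
    have mgf: "integrable M (\<lambda>\<omega>. exp (\<Sum>t\<in>{1..int T}. c t \<omega> * (Y t \<omega> - p t \<omega>)))
       \<and> (\<integral>\<omega>. exp (\<Sum>t\<in>{1..int T}. c t \<omega> * (Y t \<omega> - p t \<omega>)) \<partial>M) \<le> exp (real T * (l * M_w)^2/8)"
    proof (rule mgf_bound[OF P, where Fs=Fs])
      show "0 \<le> l * M_w" using l0 Mw_pos by simp
      show "\<forall>t\<in>{1..int T}. subalgebra M (Fs (t - 1))" by (auto intro: subT)
      show "\<forall>t\<in>{1..int T}. Y t \<in> borel_measurable M" using meas_y i unfolding Y_def by auto
      show "\<forall>t\<in>{1..int T}. \<forall>s\<in>{1..t - 1}. Y s \<in> borel_measurable (Fs (t - 1))" by (auto intro: Ym)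
      show "\<forall>t\<in>{1..int T}. \<forall>s\<in>{1..t}. p s \<in> borel_measurable (Fs (t - 1)) \<and> c s \<in> borel_measurable (Fs (t - 1))"
      proof (intro ballI conjI)
        fix t s assume "t \<in> {1..int T}" "s \<in> {1..t}"
        then have ts: "1 \<le> s" "s - 1 \<le> t - 1" by auto
        show "p s \<in> borel_measurable (Fs (t - 1))" by (rule pm[OF ts])
        have [measurable]: "(\<lambda>\<omega>. W s \<omega> $ n) \<in> borel_measurable (Fs (t - 1))" by (rule Wm[OF ts])
        show "c s \<in> borel_measurable (Fs (t - 1))" unfolding c_def by measurable
      qed
      show "\<forall>t\<in>{1..int T}. \<forall>\<omega>\<in>space M. Y t \<omega> \<in> {0, 1}" using binary i unfolding Y_def by auto
      show "\<forall>t\<in>{1..int T}. \<forall>\<omega>\<in>space M. 0 \<le> p t \<omega> \<and> p t \<omega> \<le> 1" using g_range unfolding p_def by auto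
      show "AE \<omega> in M. \<forall>t\<in>{1..int T}. \<bar>c t \<omega>\<bar> \<le> l * M_w"
        using AEw
      proof eventually_elim
        case (elim \<omega>)
        show ?case
        proof
          fix t assume "t \<in> {1..int T}"
          then have "\<bar>W t \<omega> $ n\<bar> \<le> M_w" using elim by auto
          then have "l * \<bar>W t \<omega> $ n\<bar> \<le> l * M_w" using l0 by (intro mult_left_mono) auto
          then show "\<bar>c t \<omega>\<bar> \<le> l * M_w" using \<sigma> l0 by (auto simp: c_def abs_mult)
        qed
      qed
      show "\<forall>t\<in>{1..int T}. AE \<omega> in M. real_cond_exp M (Fs (t - 1)) (indicator {\<omega> \<in> space M. Y t \<omega> = 1}) \<omega> = p t \<omega>"
        using model i unfolding Fs_def Y_def p_def W_def by auto
    qed simp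
    have eqS: "(\<Sum>t\<in>{1..int T}. c t \<omega> * (Y t \<omega> - p t \<omega>)) = l * (\<sigma> * Sg n \<omega>)" for \<omega>
      unfolding c_def Sg_def by (simp add: sum_distrib_left algebra_simps)
    have "measure M {\<omega>\<in>space M. a \<le> \<sigma> * Sg n \<omega>} \<le> exp (real T * (l * M_w)^2/8) / exp (l * a)"
      using mgf unfolding eqS by (intro chernoff[OF P _ _ l0]) auto
    also have "real T * (l * M_w)^2/8 = 2 * L"
    proof -
      have "real T * (l * M_w)^2/8 = 2 * a^2 / (real T * M_w^2)"
        using T0 Mw_pos by (simp add: l_def power2_eq_square field_simps)
      also have "\<dots> = 2 * L" unfolding a2 using T0 Mw_pos by (simp add: field_simps)
      finally show ?thesis .
    qed
    also have "l * a = 4 * L"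
    proof -
      have "l * a = 4 * a^2 / (real T * M_w^2)" by (simp add: l_def power2_eq_square)
      also have "\<dots> = 4 * L" unfolding a2 using T0 Mw_pos by (simp add: field_simps)
      finally show ?thesis .
    qed
    also have "exp (2 * L) / exp (4 * L) = (exp (- L))^2"
      by (simp add: exp_diff[symmetric] power2_eq_square exp_add[symmetric])
    also have "exp (- L) = \<epsilon> / (2 * real N)"
      using N1 eps by (simp add: L_def exp_minus)
    also have "(\<epsilon> / (2 * real N))^2 \<le> \<epsilon> / (2 * real N)"
    proof -
      have "0 \<le> \<epsilon> / (2 * real N)" "\<epsilon> / (2 * real N) \<le> 1" using eps N1 by (auto simp: field_simps)
      then have "(\<epsilon> / (2 * real N)) * (\<epsilon> / (2 * real N)) \<le> (\<epsilon> / (2 * real N)) * 1"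
        by (intro mult_left_mono) auto
      then show ?thesis by (simp only: power2_eq_square mult_1_right)
    qed
    finally show ?thesis .
  qed
  define Bn where "Bn = (\<lambda>n. {\<omega>\<in>space M. a < \<bar>Sg n \<omega>\<bar>})"
  have Bn_sets: "Bn n \<in> sets M" for n unfolding Bn_def by measurable
  have Bn_meas: "measure M (Bn n) \<le> \<epsilon> / real N" for n
  proof -
    have "Bn n \<subseteq> {\<omega>\<in>space M. a \<le> 1 * Sg n \<omega>} \<union> {\<omega>\<in>space M. a \<le> -1 * Sg n \<omega>}"
      unfolding Bn_def by auto
    then have "measure M (Bn n) \<le> measure M ({\<omega>\<in>space M. a \<le> 1 * Sg n \<omega>} \<union> {\<omega>\<in>space M. a \<le> -1 * Sg n \<omega>})"
      by (intro finite_measure_mono) auto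
    also have "\<dots> \<le> measure M {\<omega>\<in>space M. a \<le> 1 * Sg n \<omega>} + measure M {\<omega>\<in>space M. a \<le> -1 * Sg n \<omega>}"
      by (intro measure_subadditive) (auto simp: emeasure_finite)
    also have "\<dots> \<le> \<epsilon> / (2 * real N) + \<epsilon> / (2 * real N)"
      by (intro add_mono tail) auto
    also have "\<dots> = \<epsilon> / real N" by simp
    finally show ?thesis .
  qed
  obtain N0 where N0: "{\<omega>\<in>space M. \<not> (\<forall>t\<in>{1..int T}. \<forall>n. \<bar>W t \<omega> $ n\<bar> \<le> M_w)} \<subseteq> N0"
    "emeasure M N0 = 0" "N0 \<in> sets M"
    using AEw by (rule AE_E)
  define Bad where "Bad = N0 \<union> (\<Union>n. Bn n)"
  have Bad_sets: "Bad \<in> sets M" unfolding Bad_def using N0(3) Bn_sets by auto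
  have "measure M Bad \<le> measure M N0 + measure M (\<Union>n. Bn n)"
    unfolding Bad_def using N0(3) Bn_sets by (intro measure_subadditive) (auto simp: emeasure_finite)
  also have "measure M N0 = 0" using N0(2) by (simp add: emeasure_eq_measure)
  also have "measure M (\<Union>n. Bn n) \<le> (\<Sum>n\<in>UNIV. measure M (Bn n))"
    using Bn_sets by (intro measure_UNION_le) auto
  also have "\<dots> \<le> (\<Sum>n\<in>(UNIV::'n set). \<epsilon> / real N)" by (intro sum_mono Bn_meas)
  also have "\<dots> = \<epsilon>" using cardN N1 by simp
  finally have Bad_le: "measure M Bad \<le> \<epsilon>" by simp
  define A where "A = space M - Bad"
  have A_sets: "A \<in> sets M" unfolding A_def using Bad_sets by auto
  have A_meas: "measure M A \<ge> 1 - \<epsilon>" unfolding A_def using prob_compl[OF Bad_sets] Bad_le by simp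
  show ?thesis
  proof (intro bexI[OF _ A_sets] conjI A_meas ballI)
    fix \<omega> assume \<omega>A: "\<omega> \<in> A"
    then have \<omega>: "\<omega> \<in> space M" "\<omega> \<notin> N0" "\<And>n. \<omega> \<notin> Bn n" unfolding A_def Bad_def by auto
    have wb: "\<forall>t\<in>{1..int T}. \<forall>n. \<bar>W t \<omega> $ n\<bar> \<le> M_w" using N0(1) \<omega> by blast
    have Sgb: "\<bar>Sg n \<omega>\<bar> \<le> a" for n using \<omega>(3)[of n] \<omega>(1) unfolding Bn_def by auto
    define lam where "lam = lambda_min (Wmat T (\<lambda>t. W t \<omega>))"
    define F0 where "F0 = Fop g T (\<lambda>t. W t \<omega>) (\<lambda>t. y i t \<omega>) (\<theta>true i)"
    have F0c: "F0 $ n = - (1 / real T) * Sg n \<omega>" for n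
      unfolding F0_def Fop_def Sg_def p_def Y_def
      by (simp add: sum_distrib_left sum_negf[symmetric] algebra_simps)
    have F0b: "\<bar>F0 $ n\<bar> \<le> a / real T" for n
      using Sgb[of n] T0 by (simp add: F0c abs_mult divide_right_mono)
    have nF0: "norm F0 \<le> sqrt (real N) * (a / real T)"
    proof -
      have "norm F0 = sqrt (\<Sum>n\<in>UNIV. (F0 $ n)^2)" by (simp add: norm_vec_def L2_set_def)
      also have "\<dots> \<le> sqrt (\<Sum>n\<in>(UNIV::'n set). (a / real T)^2)"
      proof (intro real_sqrt_le_mono sum_mono)
        fix n :: 'n
        have "\<bar>F0 $ n\<bar>^2 \<le> (a / real T)^2" using F0b[of n] by (intro power_mono) auto
        then show "(F0 $ n)^2 \<le> (a / real T)^2" by simp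
      qed
      also have "\<dots> = sqrt (real N) * (a / real T)" using a0 T0 cardN
        by (simp add: real_sqrt_mult)
      finally show ?thesis .
    qed
    have th: "\<theta>hat \<omega> \<in> \<Theta>" and VI: "\<forall>\<theta>\<in>\<Theta>. Fop g T (\<lambda>t. W t \<omega>) (\<lambda>t. y i t \<omega>) \<theta> \<bullet> (\<theta> - \<theta>hat \<omega>) \<ge> 0"
      using weak_VI \<omega>(1) unfolding W_def by auto
    show "let lam1 = lambda_min (Wmat T (\<lambda>t. wvec idx N1 N2 N3 d z x y t \<omega>)) in 0 < lam1 \<longrightarrow>
       norm (\<theta>hat \<omega> - \<theta>true i) \<le> M_w / (m_g * lam1) * sqrt (real (dimN N1 N2 N3 d) * ln (2 * real (dimN N1 N2 N3 d) / \<epsilon>) / real T)"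
      unfolding Let_def W_def[symmetric] N_def[symmetric] L_def[symmetric] lam_def[symmetric]
    proof
      assume lam0: "0 < lam"
      have "m_g * lam * norm (\<theta>hat \<omega> - \<theta>true i) \<le> norm F0"
        unfolding lam_def F0_def
        by (rule vi_bound[OF _ \<Theta>_convex \<Theta>_compact true_in th VI g_mono g_deriv g'_lower wb _ mg_pos])
           (use T_pos Mw_pos lam0 lam_def in auto)
      also have "\<dots> \<le> sqrt (real N) * (a / real T)" by (rule nF0)
      also have "sqrt (real N) * (a / real T) = M_w * sqrt (real N * L / real T)"
      proof -
        have "a / real T = M_w * sqrt L / sqrt (real T)"
          using T0 L0 by (simp add: a_def real_sqrt_mult field_simps)
        then show ?thesis by (simp add: real_sqrt_mult real_sqrt_divide)
      qed
      finally have "m_g * lam * norm (\<theta>hat \<omega> - \<theta>true i) \<le> M_w * sqrt (real N * L / real T)" .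
      then show "norm (\<theta>hat \<omega> - \<theta>true i) \<le> M_w / (m_g * lam) * sqrt (real N * L / real T)"
        using mg_pos lam0 by (simp add: field_simps)
    qed
  qed
qed


end
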